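(* Let $p\in\mathbb{C}$. Suppose that \[ e^{pz}K(\sqrt z)=\frac\pi2\sum_{n=0}^\infty u_nz^n,\qquad |z|<1. \] Then $u_0=1$, $u_1=\frac14(4p+1)$, $u_2=\frac1{64}(32p^2+16p+9)$, and for all integers $n\ge2$, \[ u_{n+1}=\frac{(2n+1)(2n+4p+1)}{4(n+1)^2}u_n-\frac{p(2n+p)}{(n+1)^2}u_{n-1}+\frac{p^2}{(n+1)^2}u_{n-2}. \]
   Context: $K$ denotes the complete elliptic integral of the first kind, $K(r)=\int_0^{\pi/2}\frac{dt}{\sqrt{1-r^2\sin^2t}}$; for complex $|z|<1$, $K(\sqrt z)$ is understood as $\frac\pi2F(\tfrac12,\tfrac12;1;z)$, where $F(a,b;c;z)=\sum_{n=0}^\infty\frac{(a)_n(b)_n}{(c)_n\,n!}z^n$ is the Gaussian hypergeometric function and $(a)_n=a(a+1)\cdots(a+n-1)$, $(a)_0=1$. *)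

theory Defs
  imports "HOL-Analysis.Analysis"
begin

definition hypergeom2F1 :: "complex \<Rightarrow> complex \<Rightarrow> complex \<Rightarrow> complex \<Rightarrow> complex" where
  "hypergeom2F1 a b c z =
     (\<Sum>n. pochhammer a n * pochhammer b n / (pochhammer c n * of_nat (fact n)) * z ^ n)"

text \<open>K(sqrt z) for complex |z| < 1, understood as (pi/2) F(1/2,1/2;1;z).\<close>
definition ellK_sqrt :: "complex \<Rightarrow> complex" where
  "ellK_sqrt z = of_real (pi / 2) * hypergeom2F1 (1/2) (1/2) 1 z"

end

theory Submission imports Defs "HOL-Analysis.FPS_Convergence" begin

definition cK :: "nat \<Rightarrow> complex" where
  "cK n = (pochhammer (1/2) n / fact n)^2"

lemma poch_half_bound: "norm (pochhammer (1/2::complex) n) \<le> fact n"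
proof (induction n)
  case 0 then show ?case by simp
next
  case (Suc n)
  have e: "norm (1/2 + of_nat n :: complex) = 1/2 + real n"
  proof -
    have "(1/2 + of_nat n :: complex) = of_real (1/2 + real n)" by simp
    then show ?thesis by (simp only: norm_of_real)
  qed
  have "norm (pochhammer (1/2::complex) (Suc n)) = (1/2 + real n) * norm (pochhammer (1/2::complex) n)"
    by (simp add: pochhammer_rec' norm_mult e)
  also have "\<dots> \<le> (real n + 1) * fact n"
    by (rule mult_mono) (use Suc in auto)
  also have "\<dots> = fact (Suc n)" by simp
  finally show ?case .
qed

lemma cK_bound: "norm (cK n) \<le> 1"
proof -
  have "norm (pochhammer (1/2::complex) n / fact n) \<le> 1"
    using poch_half_bound[of n] by (simp add: norm_divide divide_le_eq_1)
  then show ?thesis unfolding cK_def norm_power by (simp add: power_le_one)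
qed

lemma hyp_sums:
  assumes "norm z < 1"
  shows "(\<lambda>n. cK n * z ^ n) sums hypergeom2F1 (1/2) (1/2) 1 z"
proof -
  have eq: "(\<lambda>n. pochhammer (1/2) n * pochhammer (1/2) n / (pochhammer 1 n * of_nat (fact n)) * z ^ n)
           = (\<lambda>n. cK n * z ^ n)"
    by (rule ext) (simp add: cK_def pochhammer_fact[symmetric] power2_eq_square)
  have "summable (\<lambda>n. norm z ^ n)" using assms by (simp add: summable_geometric)
  then have "summable (\<lambda>n. cK n * z ^ n)"
  proof (rule summable_comparison_test'[where N=0])
    fix n
    have "norm (cK n * z ^ n) = norm (cK n) * norm z ^ n" by (simp add: norm_mult norm_power)
    also have "\<dots> \<le> 1 * norm z ^ n" by (rule mult_right_mono) (use cK_bound in auto)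
    finally show "norm (cK n * z ^ n) \<le> norm z ^ n" by simp
  qed
  then show ?thesis unfolding hypergeom2F1_def eq by (simp add: summable_sums)
qed

lemma cK_rec: "of_nat (Suc n) ^ 2 * cK (Suc n) = (of_nat n + 1/2) ^ 2 * cK n"
proof -
  have "cK (Suc n) = ((of_nat n + 1/2) / (of_nat n + 1) * (pochhammer (1/2) n / fact n))^2"
    unfolding cK_def by (simp add: pochhammer_rec' add.commute)
  also have "\<dots> = ((of_nat n + 1/2) / (of_nat n + 1))^2 * cK n"
    unfolding cK_def by (simp only: power_mult_distrib[symmetric] times_divide_times_eq)
  finally have "cK (Suc n) = ((of_nat n + 1/2) / (of_nat n + 1))^2 * cK n" .
  moreover have "(of_nat n + 1 :: complex) \<noteq> 0"
    by (metis of_nat_Suc of_nat_eq_0_iff nat.distinct(1) add.commute)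
  moreover have "(of_nat n + 1) * ((of_nat n + 1/2) / (of_nat n + 1)) = (of_nat n + 1/2 :: complex)"
    using calculation(2) by simp
  ultimately show ?thesis
    by (metis (no_types, lifting) mult.assoc of_nat_Suc add.commute power_mult_distrib)
qed

lemma cK_ode:
  defines "C \<equiv> Abs_fps cK"
  shows "fps_X * (fps_deriv (fps_deriv C)) - fps_X * (fps_X * fps_deriv (fps_deriv C))
         + fps_deriv C - fps_const 2 * (fps_X * fps_deriv C) - fps_const (1/4) * C = 0"
proof (rule fps_ext)
  fix n
  show "fps_nth (fps_X * (fps_deriv (fps_deriv C)) - fps_X * (fps_X * fps_deriv (fps_deriv C))
         + fps_deriv C - fps_const 2 * (fps_X * fps_deriv C) - fps_const (1/4) * C) n = fps_nth 0 n"
  proof (cases n)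
    case 0
    then show ?thesis using cK_rec[of 0] by (simp add: C_def cK_def power2_eq_square)
  next
    case (Suc m)
    then show ?thesis using cK_rec[of n] by (simp add: C_def algebra_simps power2_eq_square)
  qed
qed

lemma u_eq:
  fixes p :: complex and u :: "nat \<Rightarrow> complex"
  assumes "\<And>z::complex. norm z < 1 \<Longrightarrow>
             (\<lambda>n. of_real (pi / 2) * u n * z ^ n) sums (exp (p * z) * ellK_sqrt z)"
  shows "Abs_fps u = fps_exp p * Abs_fps cK"
proof -
  have ev: "eventually (\<lambda>z::complex. norm z < 1) (nhds 0)"
  proof -
    have "eventually (\<lambda>z::complex. z \<in> ball 0 1) (nhds 0)" by (rule eventually_nhds_in_open) auto
    then show ?thesis by (rule eventually_mono) simp
  qed
  have h1: "(\<lambda>z. exp (p * z) * ellK_sqrt z) has_fps_expansion Abs_fps (\<lambda>n. of_real (pi / 2) * u n)"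
    by (rule has_fps_expansionI) (use ev assms in \<open>auto elim!: eventually_mono\<close>)
  have h2: "ellK_sqrt has_fps_expansion Abs_fps (\<lambda>n. of_real (pi / 2) * cK n)"
  proof (rule has_fps_expansionI)
    show "eventually (\<lambda>z. (\<lambda>n. fps_nth (Abs_fps (\<lambda>n. of_real (pi / 2) * cK n)) n * z ^ n) sums ellK_sqrt z) (nhds 0)"
      using ev
    proof (rule eventually_mono)
      fix z :: complex assume "norm z < 1"
      from sums_mult[OF hyp_sums[OF this], of "of_real (pi/2)"]
      show "(\<lambda>n. fps_nth (Abs_fps (\<lambda>n. of_real (pi / 2) * cK n)) n * z ^ n) sums ellK_sqrt z"
        by (simp add: ellK_sqrt_def mult.assoc)
    qed
  qed
  have h3: "(\<lambda>z. exp (p * z) * ellK_sqrt z) has_fps_expansion fps_exp p * Abs_fps (\<lambda>n. of_real (pi / 2) * cK n)"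
    by (intro has_fps_expansion_mult has_fps_expansion_exp h2)
  have "Abs_fps (\<lambda>n. of_real (pi / 2) * cK n) = fps_const (of_real (pi/2)) * Abs_fps cK"
    by (rule fps_ext) simp
  then have h4: "fps_exp p * Abs_fps (\<lambda>n. of_real (pi / 2) * cK n) = fps_const (of_real (pi/2)) * (fps_exp p * Abs_fps cK)"
    by (simp add: algebra_simps)
  show ?thesis
  proof (rule fps_ext)
    fix n
    have "fps_nth (Abs_fps (\<lambda>n. of_real (pi / 2) * u n)) n = fps_nth (fps_exp p * Abs_fps (\<lambda>n. of_real (pi / 2) * cK n)) n"
      using fps_nth_fps_expansion[OF h1, of n] fps_nth_fps_expansion[OF h3, of n] by simp
    then have "of_real (pi / 2) * u n = of_real (pi/2) * fps_nth (fps_exp p * Abs_fps cK) n"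
      unfolding h4 by simp
    then show "fps_nth (Abs_fps u) n = fps_nth (fps_exp p * Abs_fps cK) n" by simp
  qed
qed

lemma main_rec:
  fixes p :: complex and u :: "nat \<Rightarrow> complex"
  assumes W: "Abs_fps u = fps_exp p * Abs_fps cK"
  shows "of_nat (m+3) ^ 2 * u (m+3) = (2 * of_nat (m+2) + 1) * (2 * of_nat (m+2) + 4 * p + 1) / 4 * u (m+2)
                       - p * (2 * of_nat (m+2) + p) * u (m+1) + p ^ 2 * u m"
proof -
  define E where "E = fps_exp p"
  define C where "C = Abs_fps cK"
  define U where "U = Abs_fps u"
  define P where "P = fps_const p"
  have U: "U = E * C" using W by (simp add: U_def E_def C_def)
  have dE: "fps_deriv E = P * E" by (simp add: E_def P_def)
  have dP: "fps_deriv P = 0" by (simp add: P_def)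
  have d1: "fps_deriv U = P * U + E * fps_deriv C"
    by (simp add: U dE algebra_simps)
  have d2: "fps_deriv (fps_deriv U) = P * fps_deriv U + P * E * fps_deriv C + E * fps_deriv (fps_deriv C)"
    unfolding d1 by (simp add: U dE dP algebra_simps)
  define A where "A = fps_deriv (fps_deriv U) - fps_const 2 * P * fps_deriv U + P * P * U"
  define G where "G = fps_deriv U - P * U"
  have A: "A = E * fps_deriv (fps_deriv C)"
    unfolding A_def d2 by (simp add: d1 U dE algebra_simps fps_numeral_fps_const[symmetric])
  have G: "G = E * fps_deriv C"
    unfolding G_def d1 by (simp add: algebra_simps)
  have "fps_X * A - fps_X * (fps_X * A) + G - fps_const 2 * (fps_X * G) - fps_const (1/4) * U
        = E * (fps_X * (fps_deriv (fps_deriv C)) - fps_X * (fps_X * fps_deriv (fps_deriv C))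
         + fps_deriv C - fps_const 2 * (fps_X * fps_deriv C) - fps_const (1/4) * C)"
    unfolding A G U by (simp add: algebra_simps fps_numeral_fps_const[symmetric])
  also have "\<dots> = 0" using cK_ode by (simp add: C_def)
  finally have B: "fps_X * A - fps_X * (fps_X * A) + G - fps_const 2 * (fps_X * G) - fps_const (1/4) * U = 0" .
  have "fps_nth (fps_X * A - fps_X * (fps_X * A) + G - fps_const 2 * (fps_X * G) - fps_const (1/4) * U) (m+2) = 0"
    unfolding B by simp
  then have "(of_nat (m+2) * of_nat (m+3)) * u (m+3) - 2 * p * of_nat (m+2) * u (m+2) + p*p * u (m+1)
     - ((of_nat (m+1) * of_nat (m+2)) * u (m+2) - 2 * p * of_nat (m+1) * u (m+1) + p*p * u m)
     + (of_nat (m+3) * u (m+3) - p * u (m+2)) - 2 * (of_nat (m+2) * u (m+2) - p * u (m+1)) - 1/4 * u (m+2) = 0"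
    by (simp add: A_def G_def U_def P_def fps_mult_left_const_nth eval_nat_numeral algebra_simps)
  then show ?thesis
    by (simp add: algebra_simps power2_eq_square) (simp add: field_simps)?
qed

lemma gen:
  fixes q x a b c y z w :: complex
  assumes "q \<noteq> 0" "q^2 * x = a / 4 * y - b * z + c * w"
  shows "x = a / (4 * q^2) * y - b / q^2 * z + c / q^2 * w"
proof -
  have "x = (q^2 * x) / q^2" using assms(1) by simp
  also have "\<dots> = a / (4 * q^2) * y - b / q^2 * z + c / q^2 * w"
    unfolding assms(2) using assms(1) by (simp add: field_simps)
  finally show ?thesis .
qed

theorem corollary4p1:
  fixes p :: complex and u :: "nat \<Rightarrow> complex"
  assumes "\<And>z::complex. norm z < 1 \<Longrightarrow>
             (\<lambda>n. of_real (pi / 2) * u n * z ^ n) sums (exp (p * z) * ellK_sqrt z)"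
  shows "u 0 = 1 \<and> u 1 = (4 * p + 1) / 4 \<and> u 2 = (32 * p ^ 2 + 16 * p + 9) / 64 \<and>
         (\<forall>n::nat. n \<ge> 2 \<longrightarrow>
           u (n + 1) = (2 * of_nat n + 1) * (2 * of_nat n + 4 * p + 1) / (4 * (of_nat n + 1) ^ 2) * u n
                       - p * (2 * of_nat n + p) / (of_nat n + 1) ^ 2 * u (n - 1)
                       + p ^ 2 / (of_nat n + 1) ^ 2 * u (n - 2))"
proof -
  have W: "Abs_fps u = fps_exp p * Abs_fps cK" by (rule u_eq[OF assms])
  have un: "u n = (\<Sum>i=0..n. p ^ i / fact i * cK (n - i))" for n
    using arg_cong[OF W, of "\<lambda>f. fps_nth f n"] by (simp add: fps_mult_nth)
  have c0: "cK 0 = 1" by (simp add: cK_def)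
  have c1: "cK 1 = 1/4" by (simp add: cK_def power2_eq_square)
  have c2: "cK 2 = 9/64" by (simp add: cK_def power2_eq_square eval_nat_numeral pochhammer_rec')
  have u0: "u 0 = 1" using un[of 0] c0 by simp
  have u1: "u 1 = (4 * p + 1) / 4" using un[of 1] c0 c1 by simp
  have u2: "u 2 = (32 * p ^ 2 + 16 * p + 9) / 64"
  proof -
    have c1': "cK (Suc 0) = 1/4" using c1 by simp
    have c2': "cK (Suc (Suc 0)) = 9/64" using c2 by (simp add: eval_nat_numeral)
    have "u 2 = p^2/2 + p/4 + 9/64"
      using un[of 2] by (simp add: eval_nat_numeral c0 c1' c2' power2_eq_square)
    then show ?thesis by (simp add: field_simps)
  qed
  have rec: "u (n + 1) = (2 * of_nat n + 1) * (2 * of_nat n + 4 * p + 1) / (4 * (of_nat n + 1) ^ 2) * u n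
                       - p * (2 * of_nat n + p) / (of_nat n + 1) ^ 2 * u (n - 1)
                       + p ^ 2 / (of_nat n + 1) ^ 2 * u (n - 2)" if "n \<ge> 2" for n
  proof -
    obtain m where n: "n = m + 2" using \<open>n \<ge> 2\<close> by (metis add.commute le_Suc_ex)
    have r: "of_nat (m+3) ^ 2 * u (m+3) = (2 * of_nat (m+2) + 1) * (2 * of_nat (m+2) + 4 * p + 1) / 4 * u (m+2)
                       - p * (2 * of_nat (m+2) + p) * u (m+1) + p ^ 2 * u m"
      by (rule main_rec[OF W])
    have r': "(of_nat n + 1) ^ 2 * u (n+1) = (2 * of_nat n + 1) * (2 * of_nat n + 4 * p + 1) / 4 * u n
                       - p * (2 * of_nat n + p) * u (n-1) + p ^ 2 * u (n-2)"
      using r by (simp add: n numeral_3_eq_3 add_ac)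
    have nz: "(of_nat n + 1 :: complex) \<noteq> 0"
      by (metis of_nat_Suc of_nat_eq_0_iff nat.distinct(1) add.commute)
    show ?thesis using gen[OF nz r'] .
  qed
  show ?thesis using u0 u1 u2 rec by blast
qed

end
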